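(* Let $\mathcal{U}(t):=2t\,\mathbb{E}\left[\log_+^2\left\{\frac{1+N_t}{t}\right\}\right]$ for $t>0$ (with $\mathcal{U}(0)=0$), where $N_t$ is a Poisson random variable with mean $t$ and $\log_+(u)=\max\{\log u,0\}$, and let $\mathcal{V}(t):=t\log^2\!\left(1+\frac{1}{\sqrt t}\right)$. Then $$\mathcal{U}(t)\le 2+\frac{2}{t}\ \text{ for all } t>0,\qquad \mathcal{U}(t)\le 2t\log^2\!\left(1+\frac1t\right)\ \text{ for all } t\in(0,e^{-1}].$$ In particular, $\mathcal{U}(t)\le 8$ and $\mathcal{U}(t)\le 21.5\,\mathcal{V}(t)$ for all $t\ge0$. *)

theory Defs
  imports "HOL-Probability.Probability"
begin

definition log_plus :: "real \<Rightarrow> real" where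
  "log_plus u = max (ln u) 0"

definition U_fun :: "real \<Rightarrow> real" where
  "U_fun t = (if t = 0 then 0 else
     2 * t * measure_pmf.expectation (poisson_pmf t)
       (\<lambda>n::nat. (log_plus ((1 + real n) / t))\<^sup>2))"

definition V_fun :: "real \<Rightarrow> real" where
  "V_fun t = t * (ln (1 + 1 / sqrt t))\<^sup>2"

end

theory Submission
  imports Defs
begin

lemma pmf_nat_exp:
  fixes p :: "nat pmf" and f :: "nat \<Rightarrow> real"
  assumes s: "(\<lambda>n. pmf p n * f n) sums S" and nn: "\<And>n. 0 \<le> f n"
  shows "integrable (measure_pmf p) f \<and> measure_pmf.expectation p f = S"
proof -
  have int: "integrable (count_space UNIV) (\<lambda>n. pmf p n * f n)"
    using s nn unfolding integrable_count_space_nat_iff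
    by (simp add: sums_iff abs_mult pmf_nonneg)
  have i: "integrable (measure_pmf p) f"
    unfolding measure_pmf_eq_density using int
    by (subst integrable_density) auto
  have "measure_pmf.expectation p f = (\<integral>n. pmf p n * f n \<partial>count_space UNIV)"
    unfolding measure_pmf_eq_density by (subst integral_density) auto
  also have "\<dots> = S"
    using int s by (subst integral_count_space_nat) (simp_all add: sums_iff)
  finally show ?thesis using i by simp
qed

lemma poisson_sums:
  fixes t :: real assumes t: "0 < t"
  shows "(\<lambda>n. pmf (poisson_pmf t) n) sums 1"
    and "(\<lambda>n. pmf (poisson_pmf t) n * real n) sums t"
    and "(\<lambda>n. pmf (poisson_pmf t) n / (1 + real n)) sums ((1 - exp (-t)) / t)"
proof -
  have e: "(\<lambda>n. t^n / fact n) sums exp t"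
    using exp_converges[of t] by (simp add: divide_inverse scaleR_conv_of_real mult.commute)
  have "(\<lambda>n. t^n / fact n * exp (-t)) sums (exp t * exp (-t))"
    using sums_mult2[OF e] by simp
  then show P0: "(\<lambda>n. pmf (poisson_pmf t) n) sums 1"
    using t by (simp add: exp_minus field_simps)
  have "(\<lambda>n. pmf (poisson_pmf t) (Suc n) * real (Suc n)) = (\<lambda>n. t * pmf (poisson_pmf t) n)"
  proof (rule ext)
    fix n
    have pos: "fact n > (0::real)" "1 + real n > 0" by simp_all
    have f: "(fact (Suc n)::real) = (1 + real n) * fact n" by (simp add: fact_Suc)
    have "pmf (poisson_pmf t) (Suc n) * real (Suc n) = t * t^n / ((1 + real n) * fact n) * exp (-t) * (1 + real n)"
      using t by (simp only: pmf_poisson f) simp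
    also have "\<dots> = t * (t^n / fact n * exp (-t))"
      using pos by (simp add: divide_simps)
    finally show "pmf (poisson_pmf t) (Suc n) * real (Suc n) = t * pmf (poisson_pmf t) n"
      using t by simp
  qed
  moreover have "(\<lambda>n. t * pmf (poisson_pmf t) n) sums (t * 1)"
    by (rule sums_mult[OF P0])
  ultimately have "(\<lambda>n. pmf (poisson_pmf t) (Suc n) * real (Suc n)) sums t" by simp
  then show "(\<lambda>n. pmf (poisson_pmf t) n * real n) sums t"
    by (subst (asm) sums_Suc_iff) simp
  have "(\<lambda>n. pmf (poisson_pmf t) (Suc n)) sums (1 - pmf (poisson_pmf t) 0)"
    using P0 by (subst sums_Suc_iff) simp
  then have "(\<lambda>n. pmf (poisson_pmf t) (Suc n) / t) sums ((1 - exp (-t)) / t)"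
    using t by (intro sums_divide) simp
  moreover have "(\<lambda>n. pmf (poisson_pmf t) (Suc n) / t) = (\<lambda>n. pmf (poisson_pmf t) n / (1 + real n))"
  proof (rule ext)
    fix n
    have pos: "fact n > (0::real)" "1 + real n > 0" by simp_all
    have f: "(fact (Suc n)::real) = (1 + real n) * fact n" by (simp add: fact_Suc)
    have "pmf (poisson_pmf t) (Suc n) / t = t * t^n / ((1 + real n) * fact n) * exp (-t) / t"
      using t by (simp only: pmf_poisson f) simp
    also have "\<dots> = (t^n / fact n * exp (-t)) / (1 + real n)"
      using pos t by (simp add: divide_simps)
    finally show "pmf (poisson_pmf t) (Suc n) / t = pmf (poisson_pmf t) n / (1 + real n)"
      using t by simp
  qed
  ultimately show "(\<lambda>n. pmf (poisson_pmf t) n / (1 + real n)) sums ((1 - exp (-t)) / t)" by simp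
qed

lemma two_ln_le:
  fixes x :: real assumes x: "1 \<le> x"
  shows "2 * ln x \<le> x - 1 / x"
proof (cases "x = 1")
  case True then show ?thesis by simp
next
  case False
  then have x1: "1 < x" using x by simp
  have "\<exists>z>1. z < x \<and> (x - 1/x - 2 * ln x) - (1 - 1/1 - 2 * ln 1) = (x - 1) * (1 + 1 / z^2 - 2 / z)"
    using x1 by (intro MVT2) (auto intro!: derivative_eq_intros simp: field_simps power2_eq_square)
  then obtain z where z: "1 < z" "(x - 1/x - 2 * ln x) - (1 - 1/1 - 2 * ln 1) = (x - 1) * (1 + 1 / z^2 - 2 / z)"
    by blast
  have "1 + 1 / z^2 - 2 / z = (1 - 1/z)^2" using z by (simp add: field_simps power2_eq_square)
  then have "0 \<le> 1 + 1 / z^2 - 2 / z" by simp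
  then have "0 \<le> (x - 1) * (1 + 1 / z^2 - 2 / z)" using x by simp
  then show ?thesis using z by simp
qed

lemma log_plus_sq_le:
  fixes u :: real assumes u: "0 < u"
  shows "(log_plus u)\<^sup>2 \<le> (u - 1)\<^sup>2 / u"
proof (cases "1 \<le> u")
  case False
  then have "log_plus u = 0" unfolding log_plus_def using u by simp
  then show ?thesis using u by simp
next
  case True
  have s: "1 \<le> sqrt u" using True by simp
  have "ln u = 2 * ln (sqrt u)" using u by (simp add: ln_sqrt)
  also have "\<dots> \<le> sqrt u - 1 / sqrt u" by (rule two_ln_le[OF s])
  also have "\<dots> = (u - 1) / sqrt u" using u by (simp add: field_simps)
  finally have l: "ln u \<le> (u - 1) / sqrt u" .
  have l0: "0 \<le> ln u" using True by simp
  have "log_plus u = ln u" unfolding log_plus_def using l0 by simp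
  then have "(log_plus u)\<^sup>2 \<le> ((u - 1) / sqrt u)\<^sup>2"
    using l l0 by (simp add: power_mono)
  also have "\<dots> = (u - 1)\<^sup>2 / u" using u by (simp add: power_divide)
  finally show ?thesis .
qed

lemma tangent_ln_sq:
  fixes x a :: real assumes a: "exp 1 \<le> a" and x: "exp 1 \<le> x"
  shows "(ln x)\<^sup>2 \<le> (ln a)\<^sup>2 + 2 * ln a / a * (x - a)"
proof -
  have e0: "0 < exp (1::real)" by simp
  have D: "\<And>y. exp 1 \<le> y \<Longrightarrow> ((\<lambda>y. (ln y)\<^sup>2) has_real_derivative 2 * ln y / y) (at y)"
  proof -
    fix y :: real assume "exp 1 \<le> y"
    then have "0 < y" using e0 by linarith
    then show "((\<lambda>y. (ln y)\<^sup>2) has_real_derivative 2 * ln y / y) (at y)"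
      by (auto intro!: derivative_eq_intros simp: field_simps)
  qed
  consider "x = a" | "a < x" | "x < a" by linarith
  then show ?thesis
  proof cases
    case 1 then show ?thesis by simp
  next
    case 2
    obtain z where z: "a < z" "z < x" "(ln x)\<^sup>2 - (ln a)\<^sup>2 = (x - a) * (2 * ln z / z)"
      using MVT2[OF 2, of "\<lambda>y. (ln y)\<^sup>2" "\<lambda>y. 2 * ln y / y"] D a by force
    have "ln z / z \<le> ln a / a" using ln_x_over_x_mono[OF a] z by simp
    then have "(x - a) * (2 * ln z / z) \<le> (x - a) * (2 * ln a / a)"
      using 2 by (intro mult_left_mono) auto
    then show ?thesis using z by (simp add: algebra_simps)
  next
    case 3
    obtain z where z: "x < z" "z < a" "(ln a)\<^sup>2 - (ln x)\<^sup>2 = (a - x) * (2 * ln z / z)"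
      using MVT2[OF 3, of "\<lambda>y. (ln y)\<^sup>2" "\<lambda>y. 2 * ln y / y"] D x by force
    have "ln a / a \<le> ln z / z" using ln_x_over_x_mono[of z a] x z by simp
    then have m: "(a - x) * (2 * ln a / a) \<le> (a - x) * (2 * ln z / z)"
      using 3 by (intro mult_left_mono) auto
    have "2 * ln a / a * (x - a) = - ((a - x) * (2 * ln a / a))" by (metis minus_diff_eq minus_mult_left mult.commute)
    then show ?thesis using z(3) m by (smt (verit))
  qed
qed

lemma U_le_2:
  fixes t :: real assumes t: "0 < t"
  shows "U_fun t \<le> 2"
proof -
  define p where "p = poisson_pmf t"
  define g where "g n = ((1 + real n) / t - 1)\<^sup>2 / ((1 + real n) / t)" for n :: nat
  have gnn: "0 \<le> g n" for n using t unfolding g_def by simp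
  have geq: "g n = (1/t - 2) + (1/t) * real n + t * (1 / (1 + real n))" for n
  proof -
    have pos: "0 < 1 + real n" by simp
    define x where "x = (1 + real n) / t"
    have x: "0 < x" unfolding x_def using pos t by simp
    have "(x - 1)\<^sup>2 / x = x - 2 + 1 / x" using x by (simp add: field_simps power2_eq_square)
    moreover have "x = 1/t + (1/t) * real n" unfolding x_def by (simp add: add_divide_distrib)
    moreover have "1 / x = t * (1 / (1 + real n))" unfolding x_def by simp
    ultimately show ?thesis unfolding g_def x_def[symmetric] by linarith
  qed
  have fe: "(\<lambda>n. pmf p n * g n) = (\<lambda>n. (1/t - 2) * pmf p n + (1/t) * (pmf p n * real n) + t * (pmf p n / (1 + real n)))"
    by (rule ext) (simp add: geq algebra_simps)
  have "(\<lambda>n. (1/t - 2) * pmf p n + (1/t) * (pmf p n * real n) + t * (pmf p n / (1 + real n)))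
      sums ((1/t - 2) * 1 + (1/t) * t + t * ((1 - exp (-t)) / t))"
    unfolding p_def using poisson_sums[OF t]
    by (intro sums_add sums_mult) auto
  then have "(\<lambda>n. pmf p n * g n) sums (1/t - exp (-t))"
    unfolding fe using t by (simp add: field_simps)
  from pmf_nat_exp[OF this gnn] have ig: "integrable (measure_pmf p) g"
    and eg: "measure_pmf.expectation p g = 1/t - exp (-t)" by auto
  have "measure_pmf.expectation p (\<lambda>n. (log_plus ((1 + real n) / t))\<^sup>2) \<le> measure_pmf.expectation p g"
  proof (intro integral_mono')
    show "integrable (measure_pmf p) g" by (rule ig)
    fix n
    have "0 < (1 + real n) / t" using t by (simp add: add_pos_nonneg)
    then show "(log_plus ((1 + real n) / t))\<^sup>2 \<le> g n"
      unfolding g_def by (rule log_plus_sq_le)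
    show "0 \<le> g n" by (rule gnn)
  qed
  then have "measure_pmf.expectation p (\<lambda>n. (log_plus ((1 + real n) / t))\<^sup>2) \<le> 1/t - exp (-t)"
    using eg by simp
  then have "2 * t * measure_pmf.expectation p (\<lambda>n. (log_plus ((1 + real n) / t))\<^sup>2) \<le> 2 * t * (1/t - exp (-t))"
    using t by (intro mult_left_mono) auto
  also have "\<dots> = 2 - 2 * t * exp (-t)" using t by (simp add: field_simps)
  also have "\<dots> \<le> 2" using t by simp
  finally show ?thesis unfolding U_fun_def p_def using t by simp
qed

lemma U_small:
  fixes t :: real assumes t: "0 < t" and te: "t \<le> exp (-1)"
  shows "U_fun t \<le> 2 * t * (ln (1 + 1 / t))\<^sup>2"
proof -
  define p where "p = poisson_pmf t"
  define a where "a = 1 + 1 / t"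
  define c where "c = 2 * ln a / a"
  define g where "g n = (ln a)\<^sup>2 + c * ((1 + real n) / t - a)" for n :: nat
  have it: "exp 1 \<le> 1 / t"
    using te t by (simp add: field_simps exp_minus)
  have ae: "exp 1 \<le> a" unfolding a_def using it by simp
  have xe: "exp 1 \<le> (1 + real n) / t" for n
  proof -
    have "1 / t \<le> (1 + real n) / t" using t by (simp add: divide_right_mono)
    then show ?thesis using it by linarith
  qed
  have lp: "log_plus ((1 + real n) / t) = ln ((1 + real n) / t)" for n
  proof -
    have "1 \<le> (1 + real n) / t" using xe[of n] one_le_exp_iff[of 1] by linarith
    then show ?thesis unfolding log_plus_def by simp
  qed
  have tg: "(ln ((1 + real n) / t))\<^sup>2 \<le> g n" for n
    unfolding g_def c_def using tangent_ln_sq[OF ae xe[of n]] by simp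
  have gnn: "0 \<le> g n" for n using tg[of n] by (meson order.trans zero_le_power2)
  have fe: "(\<lambda>n. pmf p n * g n) = (\<lambda>n. ((ln a)\<^sup>2 + c / t - c * a) * pmf p n + (c / t) * (pmf p n * real n))"
    by (rule ext) (simp add: g_def algebra_simps add_divide_distrib)
  have "(\<lambda>n. ((ln a)\<^sup>2 + c / t - c * a) * pmf p n + (c / t) * (pmf p n * real n))
      sums (((ln a)\<^sup>2 + c / t - c * a) * 1 + (c / t) * t)"
    unfolding p_def using poisson_sums[OF t]
    by (intro sums_add sums_mult) auto
  then have "(\<lambda>n. pmf p n * g n) sums ((ln a)\<^sup>2)"
    unfolding fe using t by (simp add: field_simps a_def)
  from pmf_nat_exp[OF this gnn] have ig: "integrable (measure_pmf p) g"
    and eg: "measure_pmf.expectation p g = (ln a)\<^sup>2" by auto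
  have "measure_pmf.expectation p (\<lambda>n. (log_plus ((1 + real n) / t))\<^sup>2) \<le> measure_pmf.expectation p g"
    using ig gnn tg unfolding lp
    by (intro integral_mono') auto
  then have "measure_pmf.expectation p (\<lambda>n. (log_plus ((1 + real n) / t))\<^sup>2) \<le> (ln a)\<^sup>2"
    using eg by simp
  then have "2 * t * measure_pmf.expectation p (\<lambda>n. (log_plus ((1 + real n) / t))\<^sup>2) \<le> 2 * t * (ln a)\<^sup>2"
    using t by (intro mult_left_mono) auto
  then show ?thesis unfolding U_fun_def p_def a_def using t by simp
qed

lemma UV:
  fixes t :: real assumes t0: "0 \<le> t"
  shows "U_fun t \<le> 21.5 * V_fun t"
proof -
  consider "t = 0" | "0 < t" "t \<le> exp (-1)" | "exp (-1) < t" using t0 by linarith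
  then show ?thesis
  proof cases
    case 1 then show ?thesis by (simp add: U_fun_def V_fun_def)
  next
    case 2
    then have t: "0 < t" by simp
    define s where "s = 1 / sqrt t"
    have s0: "0 < s" unfolding s_def using t by simp
    have ss: "s\<^sup>2 = 1 / t" unfolding s_def using t by (simp add: power_divide)
    have "1 + 1 / t \<le> (1 + s)\<^sup>2" using ss s0 by (simp add: power2_eq_square algebra_simps)
    moreover have "0 < 1 + 1 / t" using t by (smt (verit) divide_pos_pos)
    ultimately have "ln (1 + 1 / t) \<le> ln ((1 + s)\<^sup>2)" by (intro ln_mono) auto
    also have "\<dots> = 2 * ln (1 + s)" using s0 by (simp add: ln_realpow)
    finally have l: "ln (1 + 1 / t) \<le> 2 * ln (1 + s)" .
    have l0: "0 \<le> ln (1 + 1 / t)" using t by simp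
    have "(ln (1 + 1 / t))\<^sup>2 \<le> (2 * ln (1 + s))\<^sup>2" using l l0 by (intro power_mono) auto
    then have "2 * t * (ln (1 + 1 / t))\<^sup>2 \<le> 2 * t * (2 * ln (1 + s))\<^sup>2"
      using t by (intro mult_left_mono) auto
    also have "\<dots> = 8 * V_fun t" unfolding V_fun_def s_def by (simp add: power2_eq_square)
    also have "\<dots> \<le> 21.5 * V_fun t"
      proof -
        have "0 \<le> V_fun t" unfolding V_fun_def using t by simp
        then show ?thesis by simp
      qed
    finally show ?thesis using U_small[OF t 2(2)] by linarith
  next
    case 3
    have "inverse 3 \<le> inverse (exp (1::real))" by (rule le_imp_inverse_le[OF exp_le]) simp
    then have "exp (-1) \<ge> (1/3::real)" by (simp only: exp_minus inverse_eq_divide)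
    then have t4: "1/4 \<le> t" using 3 by linarith
    then have t: "0 < t" by simp
    have sq: "1/2 \<le> sqrt t"
    proof -
      have "sqrt (1/4) \<le> sqrt t" using t4 by (rule real_sqrt_le_mono)
      moreover have "sqrt (1/4::real) = 1/2" by (simp add: real_sqrt_divide)
      ultimately show ?thesis by simp
    qed
    define s where "s = 1 / sqrt t"
    have s0: "0 < s" unfolding s_def using t by simp
    have s2: "s \<le> 2" unfolding s_def using sq t by (simp add: field_simps)
    have ts: "t * s\<^sup>2 = 1" unfolding s_def using t by (simp add: power_divide)
    have "ln 1 - ln (1 + s) \<le> (1 - (1 + s)) / (1 + s)" using s0 by (intro ln_diff_le) auto
    moreover have "(1 - (1 + s)) / (1 + s) = - (s / (1 + s))" by simp
    ultimately have "0 - ln (1 + s) \<le> - (s / (1 + s))" by (simp only: ln_one)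
    then have lb: "s / (1 + s) \<le> ln (1 + s)" by linarith
    have "(s / (1 + s))\<^sup>2 \<le> (ln (1 + s))\<^sup>2" using lb s0 by (intro power_mono) auto
    then have "t * (s / (1 + s))\<^sup>2 \<le> t * (ln (1 + s))\<^sup>2"
      using t by (intro mult_left_mono) auto
    moreover have "V_fun t = t * (ln (1 + s))\<^sup>2" unfolding V_fun_def s_def by simp
    moreover have "t * (s / (1 + s))\<^sup>2 = 1 / (1 + s)\<^sup>2"
      by (simp only: power_divide times_divide_eq_right ts)
    moreover have "1 / 9 \<le> 1 / (1 + s)\<^sup>2"
    proof -
      have "(1 + s)\<^sup>2 \<le> 3\<^sup>2" using s0 s2 by (intro power_mono) auto
      moreover have "0 < (1 + s)\<^sup>2" using s0 by simp
      ultimately show ?thesis by (intro divide_left_mono) auto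
    qed
    ultimately have "1/9 \<le> V_fun t" by linarith
    then show ?thesis using U_le_2[OF t] by linarith
  qed
qed

theorem lemma4:
  shows "(\<forall>t>0. U_fun t \<le> 2 + 2 / t)
    \<and> (\<forall>t. 0 < t \<and> t \<le> exp (-1) \<longrightarrow> U_fun t \<le> 2 * t * (ln (1 + 1 / t))\<^sup>2)
    \<and> (\<forall>t\<ge>0. U_fun t \<le> 8)
    \<and> (\<forall>t\<ge>0. U_fun t \<le> 21.5 * V_fun t)"
proof (intro conjI allI impI)
  fix t :: real assume t: "0 < t"
  have "0 < 2 / t" using t by simp
  then show "U_fun t \<le> 2 + 2 / t" using U_le_2[OF t] by linarith
next
  fix t :: real assume "0 < t \<and> t \<le> exp (-1)"
  then show "U_fun t \<le> 2 * t * (ln (1 + 1 / t))\<^sup>2" using U_small by auto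
next
  fix t :: real assume "0 \<le> t"
  then show "U_fun t \<le> 8"
  proof (cases "t = 0")
    case True then show ?thesis by (simp add: U_fun_def)
  next
    case False
    then have "0 < t" using \<open>0 \<le> t\<close> by simp
    from U_le_2[OF this] show ?thesis by simp
  qed
next
  fix t :: real assume "0 \<le> t"
  then show "U_fun t \<le> 21.5 * V_fun t" by (rule UV)
qed

end
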